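(* Let $k$ be an integer with $0\leq k\leq n-1$ such that $\gcd(k,n)$ is a power of $2$ (possibly $1$). Then there exists $N\geq 0$ such that $c_k^N\in(e_0)$, the two-sided ideal of $A\#C_n$ generated by $e_0$.
   Context: $\Bbbk$ is an algebraically closed field of characteristic zero, $n\ge 2$, $A=\Bbbk_{-1}[x_0,\dots,x_{n-1}]$ is generated by degree-one $x_0,\dots,x_{n-1}$ with $x_ix_j=-x_jx_i$ ($i\ne j$), $C_n=\langle\sigma\rangle$ acts by $\sigma(x_i)=x_{i+1}$ (indices in $\mathbb{Z}_n$), and $A\#C_n$ is the skew group algebra. Let $\omega$ be a primitive $n$th root of unity, $b_\gamma=\frac1n\sum_{i=0}^{n-1}\omega^{i\gamma}x_i$, $e_\alpha=\frac1n\sum_{i=0}^{n-1}(\omega^\alpha\sigma)^i$, and $c_j=b_kb_{j-k}+b_{j-k}b_k$ (independent of $k$) for $\alpha,\gamma,j\in\mathbb{Z}_n$. In particular $e_0=\frac1n\sum_{g\in C_n}g$. Here $\gcd(0,n)=n$. *)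

theory Defs
  imports "HOL-Computational_Algebra.Polynomial"
begin

text \<open>Concrete model of the skew group algebra A # C_n, A = k_{-1}[x_0..x_{n-1}].
  Basis: x^a sigma^s with a an exponent list of length n (ordered monomial
  x_0^{a_0} ... x_{n-1}^{a_{n-1}}) and s < n.\<close>

type_synonym skey = "nat list \<times> nat"
type_synonym 'k skel = "skey \<Rightarrow> 'k"

definition valid_key :: "nat \<Rightarrow> skey \<Rightarrow> bool" where
  "valid_key n p \<longleftrightarrow> length (fst p) = n \<and> snd p < n"

definition sk_carrier :: "nat \<Rightarrow> ('k::zero) skel set" where
  "sk_carrier n = {f. finite {p. f p \<noteq> 0} \<and> (\<forall>p. f p \<noteq> 0 \<longrightarrow> valid_key n p)}"

text \<open>sigma^s (x^b) as a product x_s^{b_0} x_{s+1}^{b_1} ..., reordered; exponent part:\<close>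
definition shift_exp :: "nat \<Rightarrow> nat \<Rightarrow> nat list \<Rightarrow> nat list" where
  "shift_exp n s b = map (\<lambda>j. b ! ((j + n - s) mod n)) [0..<n]"

text \<open>number of transpositions of anticommuting variables needed to reorder
  prod_i x_{(i+s) mod n}^{b_i} (i ascending) into standard order\<close>
definition sign_sigma :: "nat \<Rightarrow> nat \<Rightarrow> nat list \<Rightarrow> nat" where
  "sign_sigma n s b = (\<Sum>i<n. \<Sum>j<n.
      if i < j \<and> (j + s) mod n < (i + s) mod n then b ! i * b ! j else 0)"

text \<open>x^a x^b = (-1)^(sum_{i>j} a_i b_j) x^(a+b)\<close>
definition sign_mono :: "nat \<Rightarrow> nat list \<Rightarrow> nat list \<Rightarrow> nat" where
  "sign_mono n a b = (\<Sum>i<n. \<Sum>j<i. a ! i * b ! j)"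

definition key_mult :: "nat \<Rightarrow> skey \<Rightarrow> skey \<Rightarrow> skey" where
  "key_mult n p q = (map (\<lambda>(u, v). u + v) (zip (fst p) (shift_exp n (snd p) (fst q))),
                     (snd p + snd q) mod n)"

definition coef_mult :: "nat \<Rightarrow> skey \<Rightarrow> skey \<Rightarrow> 'k::comm_ring_1" where
  "coef_mult n p q = (-1) ^ (sign_sigma n (snd p) (fst q)
                            + sign_mono n (fst p) (shift_exp n (snd p) (fst q)))"

text \<open>(x^a sigma^s)(x^b sigma^t) = x^a sigma^s(x^b) sigma^{s+t}\<close>
definition sk_mult :: "nat \<Rightarrow> ('k::comm_ring_1) skel \<Rightarrow> 'k skel \<Rightarrow> 'k skel" where
  "sk_mult n f g = (\<lambda>m. \<Sum>pq\<in>{p. f p \<noteq> 0} \<times> {q. g q \<noteq> 0}.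
      if key_mult n (fst pq) (snd pq) = m
      then coef_mult n (fst pq) (snd pq) * f (fst pq) * g (snd pq) else 0)"

definition sk_add :: "('k::comm_ring_1) skel \<Rightarrow> 'k skel \<Rightarrow> 'k skel" where
  "sk_add f g = (\<lambda>m. f m + g m)"

definition sk_basis :: "skey \<Rightarrow> ('k::comm_ring_1) skel" where
  "sk_basis p = (\<lambda>m. if m = p then 1 else 0)"

definition sk_one :: "nat \<Rightarrow> ('k::comm_ring_1) skel" where
  "sk_one n = sk_basis (replicate n 0, 0)"

definition sk_pow :: "nat \<Rightarrow> ('k::comm_ring_1) skel \<Rightarrow> nat \<Rightarrow> 'k skel" where
  "sk_pow n f N = (sk_mult n f ^^ N) (sk_one n)"

definition sk_x :: "nat \<Rightarrow> nat \<Rightarrow> ('k::comm_ring_1) skel" where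
  "sk_x n i = sk_basis ((replicate n 0)[i mod n := 1], 0)"

definition sk_sigma :: "nat \<Rightarrow> nat \<Rightarrow> ('k::comm_ring_1) skel" where
  "sk_sigma n s = sk_basis (replicate n 0, s mod n)"

definition sk_b :: "nat \<Rightarrow> 'k::field \<Rightarrow> nat \<Rightarrow> 'k skel" where
  "sk_b n \<omega> \<gamma> = (\<lambda>m. (\<Sum>i<n. \<omega> ^ (i * \<gamma>) * sk_x n i m) / of_nat n)"

definition sk_e :: "nat \<Rightarrow> 'k::field \<Rightarrow> nat \<Rightarrow> 'k skel" where
  "sk_e n \<omega> \<alpha> = (\<lambda>m. (\<Sum>i<n. (\<omega> ^ \<alpha>) ^ i * sk_sigma n i m) / of_nat n)"

text \<open>c_j = b_k b_{j-k} + b_{j-k} b_k, independent of k; we use k = 0.\<close>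
definition sk_c :: "nat \<Rightarrow> 'k::field \<Rightarrow> nat \<Rightarrow> 'k skel" where
  "sk_c n \<omega> j = sk_add (sk_mult n (sk_b n \<omega> 0) (sk_b n \<omega> j))
                        (sk_mult n (sk_b n \<omega> j) (sk_b n \<omega> 0))"

inductive_set sk_ideal :: "nat \<Rightarrow> ('k::comm_ring_1) skel \<Rightarrow> 'k skel set"
  for n :: nat and g :: "'k skel" where
  gen: "g \<in> sk_ideal n g"
| zero: "(\<lambda>_. 0) \<in> sk_ideal n g"
| add: "x \<in> sk_ideal n g \<Longrightarrow> y \<in> sk_ideal n g \<Longrightarrow> sk_add x y \<in> sk_ideal n g"
| left: "r \<in> sk_carrier n \<Longrightarrow> x \<in> sk_ideal n g \<Longrightarrow> sk_mult n r x \<in> sk_ideal n g"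
| right: "r \<in> sk_carrier n \<Longrightarrow> x \<in> sk_ideal n g \<Longrightarrow> sk_mult n x r \<in> sk_ideal n g"

end

theory Submission
  imports Defs
begin


definition comb :: "'i set \<Rightarrow> ('i \<Rightarrow> 'k::comm_ring_1) \<Rightarrow> ('i \<Rightarrow> skey) \<Rightarrow> 'k skel" where
  "comb I w K = (\<lambda>m. \<Sum>i\<in>I. if K i = m then w i else 0)"

lemma comb_supp: "{p. comb I w K p \<noteq> 0} \<subseteq> K ` I"
proof (rule subsetI, rule ccontr)
  fix p assume a: "p \<in> {p. comb I w K p \<noteq> 0}" "p \<notin> K ` I"
  then have "(\<Sum>i\<in>I. if K i = p then w i else 0) = 0" by (intro sum.neutral) auto
  with a show False by (simp add: comb_def)
qed

lemma sk_mult_eq: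
  assumes "finite A" "finite B" "{p. f p \<noteq> 0} \<subseteq> A" "{q. g q \<noteq> 0} \<subseteq> B"
  shows "sk_mult n f g m = (\<Sum>pq\<in>A\<times>B. if key_mult n (fst pq) (snd pq) = m
      then coef_mult n (fst pq) (snd pq) * f (fst pq) * g (snd pq) else 0)"
  unfolding sk_mult_def
  by (rule sum.mono_neutral_left) (use assms in \<open>auto intro: finite_subset\<close>)

lemma comb_mult:
  assumes "finite I" "finite J"
  shows "sk_mult n (comb I w K) (comb J v L) = comb (I \<times> J)
     (\<lambda>(i,j). coef_mult n (K i) (L j) * w i * v j) (\<lambda>(i,j). key_mult n (K i) (L j))"
proof (rule ext)
  fix m
  let ?f = "comb I w K" and ?g = "comb J v L" and ?A = "K ` I \<times> L ` J"
  have "sk_mult n ?f ?g m = (\<Sum>pq\<in>?A. if key_mult n (fst pq) (snd pq) = m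
      then coef_mult n (fst pq) (snd pq) * ?f (fst pq) * ?g (snd pq) else 0)"
    by (rule sk_mult_eq) (use assms comb_supp[of I w K] comb_supp[of J v L] in auto)
  also have "\<dots> = (\<Sum>pq\<in>?A. \<Sum>i\<in>I. \<Sum>j\<in>J. if pq = (K i, L j) \<and> key_mult n (K i) (L j) = m
      then coef_mult n (K i) (L j) * w i * v j else 0)"
  proof (rule sum.cong[OF refl], goal_cases)
    case (1 pq)
    obtain p q where pq: "pq = (p,q)" by (metis surj_pair)
    show ?case (is "?l = ?r")
    proof -
      have "?l = (if key_mult n p q = m then coef_mult n p q * ?f p * ?g q else 0)" by (simp add: pq)
      also have "\<dots> = (\<Sum>i\<in>I. \<Sum>j\<in>J. if key_mult n p q = m then coef_mult n p q * (if K i = p then w i else 0) * (if L j = q then v j else 0) else 0)"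
        by (simp add: comb_def sum_distrib_left sum_distrib_right) (intro impI, subst sum.swap, rule refl)
      also have "\<dots> = ?r"
        by (rule sum.cong[OF refl], rule sum.cong[OF refl]) (auto simp: pq)
      finally show ?thesis .
    qed
  qed
  also have "\<dots> = (\<Sum>i\<in>I. \<Sum>j\<in>J. \<Sum>pq\<in>?A. if pq = (K i, L j) \<and> key_mult n (K i) (L j) = m
      then coef_mult n (K i) (L j) * w i * v j else 0)"
    by (subst sum.swap, rule sum.cong[OF refl], rule sum.swap)
  also have "\<dots> = (\<Sum>i\<in>I. \<Sum>j\<in>J. if key_mult n (K i) (L j) = m
      then coef_mult n (K i) (L j) * w i * v j else 0)"
  proof (rule sum.cong[OF refl], rule sum.cong[OF refl])
    fix i j assume "i \<in> I" "j \<in> J"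
    then have "(K i, L j) \<in> ?A" by auto
    then show "(\<Sum>pq\<in>?A. if pq = (K i, L j) \<and> key_mult n (K i) (L j) = m
      then coef_mult n (K i) (L j) * w i * v j else 0) = (if key_mult n (K i) (L j) = m
      then coef_mult n (K i) (L j) * w i * v j else 0)"
      using assms by (simp add: if_distrib[symmetric] sum.delta' conj_commute) 
  qed
  also have "\<dots> = comb (I \<times> J) (\<lambda>(i,j). coef_mult n (K i) (L j) * w i * v j) (\<lambda>(i,j). key_mult n (K i) (L j)) m"
    by (simp add: comb_def sum.cartesian_product split_def)
  finally show "sk_mult n ?f ?g m = comb (I \<times> J) (\<lambda>(i,j). coef_mult n (K i) (L j) * w i * v j) (\<lambda>(i,j). key_mult n (K i) (L j)) m" .
qed

definition ek :: "nat \<Rightarrow> nat \<Rightarrow> nat \<Rightarrow> nat list" where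
  "ek n c i = map (\<lambda>v. if v = i then c else 0) [0..<n]"

lemma length_ek[simp]: "length (ek n c i) = n" by (simp add: ek_def)
lemma nth_ek[simp]: "v < n \<Longrightarrow> ek n c i ! v = (if v = i then c else 0)" by (simp add: ek_def)

lemma length_shift[simp]: "length (shift_exp n s b) = n" by (simp add: shift_exp_def)
lemma nth_shift[simp]: "v < n \<Longrightarrow> shift_exp n s b ! v = b ! ((v + n - s) mod n)"
  by (simp add: shift_exp_def)

lemma shift0: "length b = n \<Longrightarrow> shift_exp n 0 b = b"
  by (rule nth_equalityI) auto

lemma snd_key_mult[simp]: "snd (key_mult n p q) = (snd p + snd q) mod n"
  by (simp add: key_mult_def)
lemma length_key_mult[simp]: "length (fst p) = n \<Longrightarrow> length (fst (key_mult n p q)) = n"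
  by (simp add: key_mult_def)
lemma nth_key_mult[simp]: "length (fst p) = n \<Longrightarrow> v < n \<Longrightarrow>
   fst (key_mult n p q) ! v = fst p ! v + fst q ! ((v + n - snd p) mod n)"
  by (simp add: key_mult_def)

lemma sign_sigma0: "sign_sigma n 0 b = 0"
  unfolding sign_sigma_def by (intro sum.neutral) auto

lemma sign_sigma_single: "(\<And>i j. i < n \<Longrightarrow> j < n \<Longrightarrow> i \<noteq> j \<Longrightarrow> b ! i * b ! j = 0) \<Longrightarrow> sign_sigma n s b = 0"
  unfolding sign_sigma_def by (intro sum.neutral) auto

lemma sign_mono_even1: "(\<And>u. u < n \<Longrightarrow> even (a ! u)) \<Longrightarrow> even (sign_mono n a b)"
  unfolding sign_mono_def by (intro dvd_sum) auto

lemma sign_mono_even2: "(\<And>u. u < n \<Longrightarrow> even (b ! u)) \<Longrightarrow> even (sign_mono n a b)"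
  unfolding sign_mono_def by (intro dvd_sum) auto

lemma sign_mono_ek: "i < n \<Longrightarrow> sign_mono n (ek n (Suc 0) i) b = (\<Sum>v<i. b ! v)"
proof -
  assume i: "i < n"
  have "sign_mono n (ek n (Suc 0) i) b = (\<Sum>u<n. if u = i then (\<Sum>v<i. b ! v) else 0)"
    unfolding sign_mono_def
    by (rule sum.cong[OF refl]) (simp add: sum_distrib_left[symmetric])
  also have "\<dots> = (\<Sum>v<i. b ! v)" using i by simp
  finally show ?thesis .
qed

lemma mod_shift_iff:
  assumes "v < (n::nat)" "s < n" "j < n"
  shows "((v + n - s) mod n = j) = (v = (j + s) mod n)"
proof -
  have A: "(v + n - s) mod n = (if s \<le> v then v - s else v + n - s)"
  proof (cases "s \<le> v")
    case True
    then have "v + n - s = (v - s) + n" by simp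
    then have "(v + n - s) mod n = (v - s) mod n" by (simp only: mod_add_self2)
    also have "\<dots> = v - s" using assms by simp
    finally show ?thesis using True by simp
  next
    case False
    then show ?thesis using assms by simp
  qed
  have B: "(j + s) mod n = (if j + s < n then j + s else j + s - n)"
  proof (cases "j + s < n")
    case True then show ?thesis by simp
  next
    case False
    then have "(j + s) mod n = (j + s - n) mod n" by (simp add: le_mod_geq)
    also have "\<dots> = j + s - n" using assms by simp
    finally show ?thesis using False by simp
  qed
  show ?thesis unfolding A B by (split if_split, split if_split) (use assms in arith)
qed

lemma mod_shift1: "i < (n::nat) \<Longrightarrow> s < n \<Longrightarrow> ((i + n - s) mod n + s) mod n = i"
proof -
  assume a: "i < n" "s < n"
  then have "n > 0" by simp
  then have "(i + n - s) mod n < n" by simp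
  then show ?thesis using mod_shift_iff[of i n s "(i + n - s) mod n"] a by simp
qed

lemma mod_shift2: "l < (n::nat) \<Longrightarrow> s < n \<Longrightarrow> ((l + s) mod n + n - s) mod n = l"
proof -
  assume a: "l < n" "s < n"
  then have "n > 0" by simp
  then have "(l + s) mod n < n" by simp
  then show ?thesis using mod_shift_iff[of "(l + s) mod n" n s l] a by simp
qed

lemma pow_mod: "(x::'a::monoid_mult) ^ n = 1 \<Longrightarrow> x ^ (a mod n) = x ^ a"
proof -
  assume x: "x ^ n = 1"
  have "x ^ a = x ^ (n * (a div n)) * x ^ (a mod n)" by (simp add: power_add[symmetric])
  then show ?thesis by (simp add: power_mult x)
qed

definition bb :: "nat \<Rightarrow> 'k::field \<Rightarrow> 'k skel" where
  "bb n \<mu> = comb {..<n} (\<lambda>i. \<mu> ^ i / of_nat n) (\<lambda>i. (ek n (Suc 0) i, 0))"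

definition cc :: "nat \<Rightarrow> 'k::field \<Rightarrow> 'k skel" where
  "cc n \<kappa> = comb {..<n} (\<lambda>i. 2 * \<kappa> ^ i / (of_nat n)^2) (\<lambda>i. (ek n 2 i, 0))"

definition Z :: "nat \<Rightarrow> 'k::field skel \<Rightarrow> 'k \<Rightarrow> 'k skel" where
  "Z n F \<rho> = (\<lambda>(a,s). if s < n then F (a,0) * \<rho> ^ s / of_nat n else 0)"

definition EV :: "nat \<Rightarrow> 'k::zero skel \<Rightarrow> bool" where
  "EV n F \<longleftrightarrow> finite {p. F p \<noteq> 0} \<and> (\<forall>p. F p \<noteq> 0 \<longrightarrow> snd p = 0 \<and> length (fst p) = n \<and> (\<forall>v<n. even (fst p ! v)))"

lemma comb_self: "finite S \<Longrightarrow> {p. F p \<noteq> 0} \<subseteq> S \<Longrightarrow> comb S F (\<lambda>p. p) = F"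
  unfolding comb_def by (rule ext) (auto simp: sum.delta')

lemma comb_reindex:
  assumes "bij_betw h I J" "\<And>i. i \<in> I \<Longrightarrow> w' (h i) = w i" "\<And>i. i \<in> I \<Longrightarrow> K' (h i) = K i"
  shows "comb I w K = comb J w' K'"
proof (rule ext)
  fix m
  have "comb J w' K' m = (\<Sum>i\<in>I. if K' (h i) = m then w' (h i) else 0)"
    unfolding comb_def by (rule sum.reindex_bij_betw[symmetric]) (rule assms(1))
  also have "\<dots> = comb I w K m" unfolding comb_def by (rule sum.cong) (auto simp: assms)
  finally show "comb I w K m = comb J w' K' m" by simp
qed

lemma comb_restrict:
  assumes "finite X" "D \<subseteq> X" "\<And>x. x \<in> X \<Longrightarrow> x \<notin> D \<Longrightarrow> w x = 0"
  shows "comb X w K = comb D w K"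
  unfolding comb_def by (rule ext, rule sum.mono_neutral_right) (use assms in auto)

lemma comb_add: "sk_add (comb X w1 K) (comb X w2 K) = comb X (\<lambda>x. w1 x + w2 x) K"
  unfolding sk_add_def comb_def by (rule ext) (auto simp: sum.distrib[symmetric] intro!: sum.cong)

lemma comb_cong: "(\<And>x. x \<in> X \<Longrightarrow> w x = w' x) \<Longrightarrow> (\<And>x. x \<in> X \<Longrightarrow> K x = K' x) \<Longrightarrow> comb X w K = comb X w' K'"
  unfolding comb_def by (rule ext, rule sum.cong) auto

lemma Z_of_comb:
  assumes "finite I" "\<And>i. i \<in> I \<Longrightarrow> snd (K i) = 0"
  shows "Z n (comb I w K) \<rho> = comb (I \<times> {..<n}) (\<lambda>(i,s). w i * \<rho> ^ s / of_nat n) (\<lambda>(i,s). (fst (K i), s))"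
proof (rule ext)
  fix m :: skey
  obtain a s where m: "m = (a,s)" by (metis surj_pair)
  have "comb (I \<times> {..<n}) (\<lambda>(i,s). w i * \<rho> ^ s / of_nat n) (\<lambda>(i,s). (fst (K i), s)) m
     = (\<Sum>i\<in>I. \<Sum>s'\<in>{..<n}. if (fst (K i), s') = (a,s) then w i * \<rho> ^ s' / of_nat n else 0)"
    unfolding comb_def m sum.cartesian_product by (rule sum.cong) (auto split: prod.splits)
  also have "\<dots> = (\<Sum>i\<in>I. if s < n then (if K i = (a,0) then w i else 0) * \<rho> ^ s / of_nat n else 0)"
  proof (rule sum.cong[OF refl])
    fix i assume i: "i \<in> I"
    have Ki: "(K i = (a,0)) = (fst (K i) = a)" using assms(2)[OF i] by (metis prod.collapse fst_conv)
    show "(\<Sum>s'\<in>{..<n}. if (fst (K i), s') = (a,s) then w i * \<rho> ^ s' / of_nat n else 0)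
       = (if s < n then (if K i = (a,0) then w i else 0) * \<rho> ^ s / of_nat n else 0)"
      by (simp add: Ki if_distrib[symmetric] sum.delta' conj_commute cong: if_cong)
  qed
  also have "\<dots> = Z n (comb I w K) \<rho> m"
    unfolding Z_def comb_def m by (simp add: sum_distrib_right sum_divide_distrib)
  finally show "Z n (comb I w K) \<rho> m = comb (I \<times> {..<n}) (\<lambda>(i,s). w i * \<rho> ^ s / of_nat n) (\<lambda>(i,s). (fst (K i), s)) m" by simp
qed

lemma EV_comb:
  assumes "finite I" "\<And>i. i \<in> I \<Longrightarrow> snd (K i) = 0 \<and> length (fst (K i)) = n \<and> (\<forall>v<n. even (fst (K i) ! v))"
  shows "EV n (comb I w K)"
  unfolding EV_def
proof
  show "finite {p. comb I w K p \<noteq> 0}" using comb_supp[of I w K] assms(1) by (meson finite_imageI finite_subset)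
next
  show "\<forall>p. comb I w K p \<noteq> 0 \<longrightarrow> snd p = 0 \<and> length (fst p) = n \<and> (\<forall>v<n. even (fst p ! v))"
  proof (intro allI impI)
    fix p assume "comb I w K p \<noteq> 0"
    then obtain i where "i \<in> I" "p = K i" using comb_supp[of I w K] by blast
    then show "snd p = 0 \<and> length (fst p) = n \<and> (\<forall>v<n. even (fst p ! v))" using assms(2) by simp
  qed
qed

lemma EV_self: "EV n F \<Longrightarrow> comb {p. F p \<noteq> 0} F (\<lambda>p. p) = F"
  by (rule comb_self) (auto simp: EV_def)

lemma Z_EV:
  assumes "EV n F"
  shows "Z n F \<rho> = comb ({p. F p \<noteq> 0} \<times> {..<n}) (\<lambda>(p,s). F p * \<rho> ^ s / of_nat n) (\<lambda>(p,s). (fst p, s))"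
proof -
  have "Z n F \<rho> = Z n (comb {p. F p \<noteq> 0} F (\<lambda>p. p)) \<rho>" using EV_self[OF assms] by simp
  also have "\<dots> = comb ({p. F p \<noteq> 0} \<times> {..<n}) (\<lambda>(p,s). F p * \<rho> ^ s / of_nat n) (\<lambda>(p,s). (fst p, s))"
    by (rule Z_of_comb) (use assms in \<open>auto simp: EV_def\<close>)
  finally show ?thesis .
qed

lemma coef_ek2: "length (fst q) = n \<Longrightarrow> coef_mult n (ek n 2 i, 0) q = 1"
proof -
  assume "length (fst q) = n"
  have "even (sign_mono n (ek n 2 i) (shift_exp n 0 (fst q)))" by (rule sign_mono_even1) simp
  then show ?thesis by (simp add: coef_mult_def sign_sigma0)
qed

lemma coef_right_ek:
  assumes "\<And>u. u < n \<Longrightarrow> even (fst p ! u)"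
  shows "coef_mult n p (ek n c l, 0) = 1"
proof -
  have "sign_sigma n (snd p) (ek n c l) = 0" by (rule sign_sigma_single) auto
  moreover have "even (sign_mono n (fst p) (shift_exp n (snd p) (ek n c l)))" by (rule sign_mono_even1) (rule assms)
  ultimately show ?thesis by (simp add: coef_mult_def)
qed

lemma coef_ek1: "i < n \<Longrightarrow> length (fst q) = n \<Longrightarrow> coef_mult n (ek n (Suc 0) i, 0) q = (-1) ^ (\<Sum>v<i. fst q ! v)"
  using sign_mono_ek[of i n "fst q"] by (simp add: coef_mult_def sign_sigma0 shift0)

lemma EV_D: "EV n F \<Longrightarrow> F p \<noteq> 0 \<Longrightarrow> snd p = 0 \<and> length (fst p) = n \<and> (\<forall>v<n. even (fst p ! v))"
  by (cases p) (simp add: EV_def)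

lemma EV_D2: "EV n F \<Longrightarrow> F (a,s) \<noteq> 0 \<Longrightarrow> s = 0 \<and> length a = n \<and> (\<forall>v<n. even (a ! v))"
  by (simp add: EV_def)

lemma EV_fin: "EV n F \<Longrightarrow> finite {p. F p \<noteq> 0}"
  by (simp add: EV_def)

lemma ccF:
  assumes EV: "EV n F"
  shows "sk_mult n (cc n \<kappa>) F = comb ({..<n} \<times> {p. F p \<noteq> 0})
     (\<lambda>(i,p). 2 * \<kappa>^i / (of_nat n)^2 * F p) (\<lambda>(i,p). key_mult n (ek n 2 i, 0) p)"
proof -
  have fin: "finite {p. F p \<noteq> 0}" using EV by (simp add: EV_def)
  have "sk_mult n (cc n \<kappa>) F = sk_mult n (cc n \<kappa>) (comb {p. F p \<noteq> 0} F (\<lambda>p. p))"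
    using EV_self[OF EV] by simp
  also have "\<dots> = comb ({..<n} \<times> {p. F p \<noteq> 0})
     (\<lambda>(i,p). 2 * \<kappa>^i / (of_nat n)^2 * F p) (\<lambda>(i,p). key_mult n (ek n 2 i, 0) p)"
    unfolding cc_def
    apply (subst comb_mult)
      apply (simp_all add: fin)
    apply (rule comb_cong)
    using EV by (auto simp: EV_def coef_ek2)
  finally show ?thesis .
qed

lemma EV_ccF: "EV n F \<Longrightarrow> EV n (sk_mult n (cc n \<kappa>) F)"
  apply (subst ccF, assumption)
  apply (rule EV_comb)
   apply (simp add: EV_def)
  apply (auto dest: EV_D2)
  done

lemma Z_ccF:
  assumes EV: "EV n F"
  shows "Z n (sk_mult n (cc n \<kappa>) F) \<rho> = comb (({..<n} \<times> {p. F p \<noteq> 0}) \<times> {..<n})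
     (\<lambda>((i,p),s). 2 * \<kappa>^i / (of_nat n)^2 * F p * \<rho>^s / of_nat n) (\<lambda>((i,p),s). (fst (key_mult n (ek n 2 i, 0) p), s))"
  apply (subst ccF[OF EV])
  apply (subst Z_of_comb)
  using EV apply (auto simp: EV_fin dest: EV_D2)[2]
  apply (rule comb_cong)
   apply auto
  done

lemma I1:
  assumes EV: "EV n F"
  shows "sk_mult n (cc n \<kappa>) (Z n F \<rho>) = Z n (sk_mult n (cc n \<kappa>) F) \<rho>"
proof -
  have fin: "finite {p. F p \<noteq> 0}" using EV by (simp add: EV_def)
  show ?thesis
    apply (subst Z_ccF[OF EV])
    apply (unfold cc_def Z_EV[OF EV])
    apply (subst comb_mult)
      apply (simp_all add: fin)
    apply (rule comb_reindex[where h="\<lambda>(i,(p,s)). ((i,p),s)"])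
    subgoal by (auto simp: bij_betw_def inj_on_def image_def)
    subgoal apply clarsimp apply (frule EV_D2[OF EV]) by (simp add: coef_ek2 mult_ac)
    subgoal by (auto simp: key_mult_def dest: EV_D2[OF EV])
    done
qed

lemma key_I2:
  assumes "length a = n" "s < n" "j < n"
  shows "key_mult n (a, s) (ek n 2 j, 0) = (fst (key_mult n (ek n 2 ((j + s) mod n), 0) (a, 0)), s)"
proof -
  have n: "n > 0" using assms by simp
  have "fst (key_mult n (a, s) (ek n 2 j, 0)) = fst (key_mult n (ek n 2 ((j + s) mod n), 0) (a, 0))"
  proof (rule nth_equalityI)
    show "length (fst (key_mult n (a, s) (ek n 2 j, 0))) = length (fst (key_mult n (ek n 2 ((j + s) mod n), 0) (a, 0)))"
      using assms by simp
  next
    fix v assume "v < length (fst (key_mult n (a, s) (ek n 2 j, 0)))"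
    then have v: "v < n" using assms by simp
    have m: "(v + n - s) mod n < n" using n by simp
    show "fst (key_mult n (a, s) (ek n 2 j, 0)) ! v = fst (key_mult n (ek n 2 ((j + s) mod n), 0) (a, 0)) ! v"
      using assms v m by (simp add: mod_shift_iff)
  qed
  then show ?thesis using assms by (simp add: prod_eq_iff)
qed

lemma I2:
  assumes EV: "EV n F" and \<kappa>: "\<kappa> ^ n = 1"
  shows "sk_mult n (Z n F (\<rho> * \<kappa>)) (cc n \<kappa>) = Z n (sk_mult n (cc n \<kappa>) F) \<rho>"
proof -
  have fin: "finite {p. F p \<noteq> 0}" using EV by (simp add: EV_def)
  show ?thesis
    apply (subst Z_ccF[OF EV])
    apply (unfold cc_def Z_EV[OF EV])
    apply (subst comb_mult)
      apply (simp_all add: fin)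
    apply (rule comb_reindex[where h="\<lambda>((p,s),j). ((((j + s) mod n), p), s)"])
    subgoal
      apply (rule bij_betw_byWitness[where f'="\<lambda>((i,p),s). ((p,s), (i + n - s) mod n)"])
         apply (auto simp: mod_shift1 mod_shift2)
      done
    subgoal
      apply clarsimp
      apply (frule EV_D2[OF EV])
      apply (simp add: coef_right_ek pow_mod[OF \<kappa>] power_add power_mult_distrib)
      apply (simp add: field_simps)
      done
    subgoal
      apply clarsimp
      apply (frule EV_D2[OF EV])
      apply (simp add: key_I2)
      done
    done
qed

lemma sum_ind_lt: "(\<Sum>v<(i::nat). if v = t then 1 else 0 :: nat) = (if t < i then 1 else 0)"
  by (subst sum.delta) auto

lemma coef_I3:
  assumes "length a = n" "\<forall>v<n. even (a ! v)" "i < n" "s < n" "l < n"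
  shows "coef_mult n (ek n (Suc 0) i, 0) (key_mult n (a,s) (ek n (Suc 0) l, 0)) = (if (l + s) mod n < i then -1 else 1)"
proof -
  have n: "n > 0" using assms by simp
  have "(\<Sum>v<i. fst (key_mult n (a,s) (ek n (Suc 0) l, 0)) ! v) = (\<Sum>v<i. a ! v) + (\<Sum>v<i. if v = (l + s) mod n then 1 else 0)"
  proof -
    have "(\<Sum>v<i. fst (key_mult n (a,s) (ek n (Suc 0) l, 0)) ! v) = (\<Sum>v<i. a ! v + (if v = (l + s) mod n then 1 else 0))"
    proof (rule sum.cong[OF refl])
      fix v assume "v \<in> {..<i}"
      then have v: "v < n" using assms by simp
      have m: "(v + n - s) mod n < n" using n by simp
      show "fst (key_mult n (a,s) (ek n (Suc 0) l, 0)) ! v = a ! v + (if v = (l + s) mod n then 1 else 0)"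
        using assms v m by (simp add: mod_shift_iff)
    qed
    then show ?thesis by (simp add: sum.distrib)
  qed
  moreover have "even (\<Sum>v<i. a ! v)" using assms by (intro dvd_sum) auto
  ultimately show ?thesis using assms
    by (simp add: coef_ek1 sum_ind_lt power_add)
qed

definition TW :: "nat \<Rightarrow> 'k::field skel \<Rightarrow> 'k \<Rightarrow> 'k \<Rightarrow> 'k \<Rightarrow> nat \<times> (skey \<times> nat) \<times> nat \<Rightarrow> 'k" where
  "TW n F \<mu> \<nu> \<rho> = (\<lambda>(i,((p,s),l)). (if (l + s) mod n < i then -1 else 1) * (\<mu>^i * F p * \<rho>^s * \<nu>^l) / (of_nat n)^3)"

definition TK :: "nat \<Rightarrow> nat \<times> (skey \<times> nat) \<times> nat \<Rightarrow> skey" where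
  "TK n = (\<lambda>(i,((p,s),l)). (map (\<lambda>v. (if v = i then 1 else 0) + fst p ! v + (if v = (l + s) mod n then 1 else 0)) [0..<n], s))"

lemma key_T:
  assumes "length a = n" "i < n" "s < n" "l < n"
  shows "key_mult n (ek n (Suc 0) i, 0) (key_mult n (a,s) (ek n (Suc 0) l, 0)) =
    (map (\<lambda>v. (if v = i then 1 else 0) + a ! v + (if v = (l + s) mod n then 1 else 0)) [0..<n], s)"
proof -
  have n: "n > 0" using assms by simp
  have "fst (key_mult n (ek n (Suc 0) i, 0) (key_mult n (a,s) (ek n (Suc 0) l, 0))) = map (\<lambda>v. (if v = i then 1 else 0) + a ! v + (if v = (l + s) mod n then 1 else 0)) [0..<n]"
  proof (rule nth_equalityI)
    fix v assume "v < length (fst (key_mult n (ek n (Suc 0) i, 0) (key_mult n (a,s) (ek n (Suc 0) l, 0))))"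
    then have v: "v < n" using assms by simp
    have m: "(v + n - s) mod n < n" using n by simp
    show "fst (key_mult n (ek n (Suc 0) i, 0) (key_mult n (a,s) (ek n (Suc 0) l, 0))) ! v = map (\<lambda>v. (if v = i then 1 else 0) + a ! v + (if v = (l + s) mod n then 1 else 0)) [0..<n] ! v"
      using assms v m by (simp add: mod_shift_iff)
  qed (use assms in simp)
  then show ?thesis using assms by (simp add: prod_eq_iff)
qed

lemma T_comb:
  assumes EV: "EV n F"
  shows "sk_mult n (bb n \<mu>) (sk_mult n (Z n F \<rho>) (bb n \<nu>)) =
    comb ({..<n} \<times> (({p. F p \<noteq> 0} \<times> {..<n}) \<times> {..<n})) (TW n F \<mu> \<nu> \<rho>) (TK n)"
proof -
  have fin: "finite {p. F p \<noteq> 0}" using EV by (simp add: EV_def)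
  show ?thesis
    apply (unfold bb_def Z_EV[OF EV])
    apply (subst comb_mult)
      apply (simp_all add: fin)
    apply (subst comb_mult)
      apply (simp_all add: fin)
    apply (rule comb_cong)
    subgoal
      apply (clarsimp simp: TW_def)
      apply (frule EV_D2[OF EV])
      apply (simp add: coef_right_ek coef_I3)
      apply (simp add: power3_eq_cube mult_ac)
      done
    subgoal
      apply (clarsimp simp: TK_def)
      apply (frule EV_D2[OF EV])
      apply (simp add: key_T)
      done
    done
qed



lemma I3:
  assumes EV: "EV n F" and \<mu>: "\<mu> ^ n = 1" and \<nu>: "\<nu> ^ n = 1"
  shows "sk_add (sk_mult n (bb n \<mu>) (sk_mult n (Z n F (\<rho> * \<nu>)) (bb n \<nu>)))
                (sk_mult n (bb n \<nu>) (sk_mult n (Z n F (\<rho> * \<mu>)) (bb n \<mu>)))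
         = Z n (sk_mult n (cc n (\<mu> * \<nu>)) F) \<rho>"
proof -
  let ?S = "{p. F p \<noteq> 0}"
  let ?X = "{..<n} \<times> ((?S \<times> {..<n}) \<times> {..<n})"
  let ?W1 = "TW n F \<mu> \<nu> (\<rho> * \<nu>)" and ?W2 = "TW n F \<nu> \<mu> (\<rho> * \<mu>)"
  define h where "h = (\<lambda>(i::nat,((p::skey,s::nat),l::nat)). ((l + s) mod n, ((p,s), (i + n - s) mod n)))"
  define W' where "W' = (\<lambda>(i::nat,((p::skey,s::nat),l::nat)). if (l + s) mod n = i then 2 * (\<mu> * \<nu>)^i * F p * \<rho>^s / (of_nat n)^3 else 0)"
  define D where "D = {x \<in> ?X. (case x of (i,((p,s),l)) \<Rightarrow> (l + s) mod n = i)}"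
  define g where "g = (\<lambda>((i::nat,p::skey),s::nat). (i, ((p,s), (i + n - s) mod n)))"
  have fin: "finite ?S" using EV by (simp add: EV_def)
  have hX: "bij_betw h ?X ?X"
    by (rule bij_betw_byWitness[where f'=h]) (auto simp: h_def mod_shift1 mod_shift2)
  have T2: "comb ?X (\<lambda>x. ?W2 (h x)) (\<lambda>x. TK n (h x)) = comb ?X ?W2 (TK n)"
    by (rule comb_reindex[OF hX]) auto
  have Kh: "TK n (h x) = TK n x" if "x \<in> ?X" for x
  proof -
    obtain i p s l where x: "x = (i,((p,s),l))" by (metis surj_pair)
    have "i < n" "s < n" "l < n" using that x by auto
    then have "((i + n - s) mod n + s) mod n = i" by (simp add: mod_shift1)
    then show ?thesis by (auto simp: x h_def TK_def)
  qed
  have Wsum: "?W1 x + ?W2 (h x) = W' x" if "x \<in> ?X" for x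
  proof -
    obtain i p s l where x: "x = (i,((p,s),l))" by (metis surj_pair)
    have il: "i < n" "s < n" "l < n" using that x by auto
    define t where "t = (l + s) mod n"
    define l' where "l' = (i + n - s) mod n"
    have tl': "(l' + s) mod n = i" using il by (simp add: l'_def mod_shift1)
    have e1: "\<nu>^s * \<nu>^l = \<nu>^t" unfolding t_def pow_mod[OF \<nu>] by (simp add: power_add[symmetric] add.commute)
    have e2: "\<mu>^l' * \<mu>^s = \<mu>^i" using tl' pow_mod[OF \<mu>, of "l' + s"] by (simp add: power_add)
    have e1': "\<nu>^l * \<nu>^s = \<nu>^t" using e1 by (simp add: mult.commute)
    have e2': "\<mu>^s * \<mu>^l' = \<mu>^i" using e2 by (simp add: mult.commute)
    let ?Q = "\<mu>^i * \<nu>^t * \<rho>^s * F p / (of_nat n)^3"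
    have A: "?W1 x = (if t < i then -1 else 1) * ?Q"
    proof -
      have "?W1 x = (if t < i then -1 else 1) * (\<mu>^i * F p * (\<rho>^s * (\<nu>^s * \<nu>^l))) / (of_nat n)^3"
        by (simp add: TW_def x t_def power_mult_distrib mult_ac)
      then show ?thesis by (simp add: e1 e1' mult_ac)
    qed
    have B: "?W2 (h x) = (if i < t then -1 else 1) * ?Q"
    proof -
      have "?W2 (h x) = (if i < t then -1 else 1) * (\<nu>^t * F p * (\<rho>^s * (\<mu>^l' * \<mu>^s))) / (of_nat n)^3"
        by (simp add: TW_def x h_def t_def l'_def tl'[unfolded l'_def] power_mult_distrib mult_ac)
      then show ?thesis by (simp add: e2 e2' mult_ac)
    qed
    show ?thesis
    proof (cases "t = i")
      case True
      then show ?thesis using A B by (simp add: W'_def x t_def[symmetric] power_mult_distrib mult_ac)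
    next
      case False
      then have "(if t < i then -1 else 1) + (if i < t then -1 else (1::'a)) = 0" by auto
      then have "?W1 x + ?W2 (h x) = 0" unfolding A B using False by (simp add: distrib_right[symmetric])
      then show ?thesis using False by (simp add: W'_def x t_def[symmetric])
    qed
  qed
  have gD: "bij_betw g (({..<n} \<times> ?S) \<times> {..<n}) D"
    apply (rule bij_betw_byWitness[where f'="\<lambda>(i,((p,s),l)). ((i,p),s)"])
       apply (auto simp: g_def D_def mod_shift1 mod_shift2)
    done
  have last: "comb (({..<n} \<times> ?S) \<times> {..<n})
     (\<lambda>((i,p),s). 2 * (\<mu> * \<nu>)^i / (of_nat n)^2 * F p * \<rho>^s / of_nat n) (\<lambda>((i,p),s). (fst (key_mult n (ek n 2 i, 0) p), s))
     = comb D W' (TK n)"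
  proof (rule comb_reindex[OF gD])
    fix y assume y: "y \<in> ({..<n} \<times> ?S) \<times> {..<n}"
    obtain i p s where yy: "y = ((i,p),s)" by (metis surj_pair)
    have il: "i < n" "s < n" "F p \<noteq> 0" using y yy by auto
    have i2: "((i + n - s) mod n + s) mod n = i" using il by (simp add: mod_shift1)
    show "W' (g y) = (\<lambda>((i,p),s). 2 * (\<mu> * \<nu>)^i / (of_nat n)^2 * F p * \<rho>^s / of_nat n) y"
      by (simp add: W'_def g_def yy i2 power3_eq_cube power2_eq_square)
    have len: "length (fst p) = n" using EV_D[OF EV il(3)] by simp
    show "TK n (g y) = (\<lambda>((i,p),s). (fst (key_mult n (ek n 2 i, 0) p), s)) y"
      using il len i2 by (auto simp: TK_def g_def yy intro!: nth_equalityI)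
  qed
  have "sk_add (sk_mult n (bb n \<mu>) (sk_mult n (Z n F (\<rho> * \<nu>)) (bb n \<nu>)))
                (sk_mult n (bb n \<nu>) (sk_mult n (Z n F (\<rho> * \<mu>)) (bb n \<mu>)))
      = sk_add (comb ?X ?W1 (TK n)) (comb ?X ?W2 (TK n))"
    by (simp add: T_comb[OF EV])
  also have "\<dots> = sk_add (comb ?X ?W1 (TK n)) (comb ?X (\<lambda>x. ?W2 (h x)) (TK n))"
    using T2 comb_cong[of ?X "\<lambda>x. ?W2 (h x)" "\<lambda>x. ?W2 (h x)" "\<lambda>x. TK n (h x)" "TK n"] Kh by simp
  also have "\<dots> = comb ?X (\<lambda>x. ?W1 x + ?W2 (h x)) (TK n)" by (rule comb_add)
  also have "\<dots> = comb ?X W' (TK n)" by (rule comb_cong) (auto simp: Wsum)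
  also have "\<dots> = comb D W' (TK n)"
    by (rule comb_restrict) (auto simp: fin D_def W'_def)
  also have "\<dots> = Z n (sk_mult n (cc n (\<mu> * \<nu>)) F) \<rho>"
    using last by (simp add: Z_ccF[OF EV])
  finally show ?thesis .
qed



lemma rep_ek: "i < n \<Longrightarrow> (replicate n 0)[i := Suc 0] = ek n (Suc 0) i"
  by (rule nth_equalityI) (auto simp: nth_list_update)

lemma sk_b_eq: "sk_b n \<omega> \<gamma> = bb n (\<omega> ^ \<gamma>)"
proof (rule ext)
  fix m
  have "sk_b n \<omega> \<gamma> m = (\<Sum>i<n. (if (ek n (Suc 0) i, 0) = m then (\<omega> ^ \<gamma>) ^ i else 0)) / of_nat n"
    unfolding sk_b_def
    by (rule arg_cong[where f="\<lambda>x. x / of_nat n"], rule sum.cong)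
       (auto simp: sk_x_def sk_basis_def rep_ek power_mult[symmetric] mult.commute)
  then show "sk_b n \<omega> \<gamma> m = bb n (\<omega> ^ \<gamma>) m"
    by (simp add: bb_def comb_def sum_divide_distrib) (rule sum.cong; simp)
qed

lemma comb_carrier:
  assumes "finite I" "\<And>i. i \<in> I \<Longrightarrow> valid_key n (K i)"
  shows "comb I w K \<in> sk_carrier n"
  unfolding sk_carrier_def
proof (intro CollectI conjI allI impI)
  show "finite {p. comb I w K p \<noteq> 0}" using comb_supp[of I w K] assms(1) by (meson finite_imageI finite_subset)
next
  fix p assume "comb I w K p \<noteq> 0"
  then obtain i where "i \<in> I" "p = K i" using comb_supp[of I w K] by blast
  then show "valid_key n p" using assms(2) by simp
qed

lemma bb_carrier: "n > 0 \<Longrightarrow> bb n \<mu> \<in> sk_carrier n"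
  unfolding bb_def by (rule comb_carrier) (auto simp: valid_key_def)

lemma cc_carrier: "n > 0 \<Longrightarrow> cc n \<kappa> \<in> sk_carrier n"
  unfolding cc_def by (rule comb_carrier) (auto simp: valid_key_def)

lemma coef_ek1_ek1: "i < n \<Longrightarrow> j < n \<Longrightarrow> coef_mult n (ek n (Suc 0) i, 0) (ek n (Suc 0) j, 0) = (if j < i then -1 else 1)"
proof -
  assume a: "i < n" "j < n"
  have "(\<Sum>v<i. ek n (Suc 0) j ! v) = (\<Sum>v<i. if v = j then 1 else 0)"
    by (rule sum.cong) (use a in auto)
  then show ?thesis using a by (simp add: coef_ek1 sum_ind_lt)
qed

lemma I4:
  assumes \<kappa>: "\<kappa> ^ n = 1" and n: "n > 0"
  shows "sk_add (sk_mult n (bb n 1) (bb n \<kappa>)) (sk_mult n (bb n \<kappa>) (bb n 1)) = cc n \<kappa>"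
proof -
  let ?X = "{..<n} \<times> {..<n}"
  let ?K = "\<lambda>(i,j). key_mult n (ek n (Suc 0) i, 0) (ek n (Suc 0) j, 0)"
  define W1 where "W1 = (\<lambda>(i::nat,j::nat). (if j < i then -1 else 1) * \<kappa>^j / (of_nat n)^2)"
  define W2 where "W2 = (\<lambda>(i::nat,j::nat). (if j < i then -1 else 1) * \<kappa>^i / (of_nat n)^2)"
  define W' where "W' = (\<lambda>(i::nat,j::nat). if i = j then 2 * \<kappa>^j / (of_nat n)^2 else 0)"
  define h where "h = (\<lambda>(i::nat,j::nat). (j,i))"
  define D where "D = {x \<in> ?X. fst x = snd x}"
  have hX: "bij_betw h ?X ?X"
    by (rule bij_betw_byWitness[where f'=h]) (auto simp: h_def)
  have P1: "sk_mult n (bb n 1) (bb n \<kappa>) = comb ?X W1 ?K"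
    unfolding bb_def
    by (subst comb_mult) (auto simp: W1_def coef_ek1_ek1 power2_eq_square intro!: comb_cong)
  have P2: "sk_mult n (bb n \<kappa>) (bb n 1) = comb ?X W2 ?K"
    unfolding bb_def
    by (subst comb_mult) (auto simp: W2_def coef_ek1_ek1 power2_eq_square intro!: comb_cong)
  have Kh: "?K (h x) = ?K x" if "x \<in> ?X" for x
    using that n by (auto simp: h_def prod_eq_iff intro!: nth_equalityI)
  have T2: "comb ?X (\<lambda>x. W2 (h x)) (\<lambda>x. ?K (h x)) = comb ?X W2 ?K"
    by (rule comb_reindex[OF hX]) auto
  have gD: "bij_betw (\<lambda>j. (j,j)) {..<n} D"
    by (rule bij_betw_byWitness[where f'=fst]) (auto simp: D_def)
  have last: "comb {..<n} (\<lambda>i. 2 * \<kappa> ^ i / (of_nat n)^2) (\<lambda>i. (ek n 2 i, 0)) = comb D W' ?K"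
    by (rule comb_reindex[OF gD]) (auto simp: W'_def prod_eq_iff intro!: nth_equalityI)
  have "sk_add (sk_mult n (bb n 1) (bb n \<kappa>)) (sk_mult n (bb n \<kappa>) (bb n 1)) = sk_add (comb ?X W1 ?K) (comb ?X (\<lambda>x. W2 (h x)) ?K)"
    unfolding P1 P2 using T2 comb_cong[of ?X "\<lambda>x. W2 (h x)" "\<lambda>x. W2 (h x)" "\<lambda>x. ?K (h x)" ?K] Kh by simp
  also have "\<dots> = comb ?X (\<lambda>x. W1 x + W2 (h x)) ?K" by (rule comb_add)
  also have "\<dots> = comb ?X W' ?K" by (rule comb_cong) (auto simp: W1_def W2_def W'_def h_def)
  also have "\<dots> = comb D W' ?K" by (rule comb_restrict) (auto simp: D_def W'_def)
  also have "\<dots> = cc n \<kappa>" unfolding cc_def using last by simp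
  finally show ?thesis .
qed

lemma sk_c_eq: "\<kappa> = \<omega> ^ k \<Longrightarrow> \<kappa> ^ n = 1 \<Longrightarrow> n > 0 \<Longrightarrow> sk_c n \<omega> k = cc n \<kappa>"
  unfolding sk_c_def sk_b_eq using I4[of \<kappa> n] by simp

lemma EV_one: "EV n (sk_one n :: 'k::field skel)"
proof -
  have "{p. (sk_one n :: 'k skel) p \<noteq> 0} = {(replicate n 0, 0)}"
    by (auto simp: sk_one_def sk_basis_def)
  then show ?thesis unfolding EV_def by (auto simp: sk_one_def sk_basis_def)
qed

lemma e0_eq: "sk_e n \<omega> 0 = Z n (sk_one n) 1"
proof (rule ext)
  fix m :: skey
  obtain a s where m: "m = (a,s)" by (metis surj_pair)
  have "(\<Sum>i<n. (\<omega> ^ 0) ^ i * sk_sigma n i (a,s)) = (\<Sum>i<n. if i = s then (if a = replicate n 0 then 1 else 0) else 0)"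
    by (rule sum.cong) (auto simp: sk_sigma_def sk_basis_def)
  also have "\<dots> = (if s < n then (if a = replicate n 0 then 1 else 0) else 0)"
    by (subst sum.delta) auto
  finally show "sk_e n \<omega> 0 m = Z n (sk_one n) 1 m"
    unfolding sk_e_def m by (simp add: Z_def sk_one_def sk_basis_def)
qed

lemma sum_Z:
  fixes \<omega> :: "'k::field_char_0"
  assumes EV: "EV n F" and \<omega>: "\<omega> ^ n = 1" and prim: "\<forall>j. 0 < j \<and> j < n \<longrightarrow> \<omega> ^ j \<noteq> 1" and n: "n > 0"
  shows "(\<lambda>m. \<Sum>\<alpha><n. Z n F (\<omega> ^ \<alpha>) m) = F"
proof (rule ext)
  fix m :: skey
  obtain a s where m: "m = (a,s)" by (metis surj_pair)
  show "(\<Sum>\<alpha><n. Z n F (\<omega> ^ \<alpha>) m) = F m"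
  proof (cases "s < n")
    case False
    then have "F (a,s) = 0" using EV_D2[OF EV, of a s] n by (cases "F (a,s) = 0") auto
    then show ?thesis using False by (simp add: m Z_def)
  next
    case True
    have "(\<Sum>\<alpha><n. Z n F (\<omega> ^ \<alpha>) m) = F (a,0) / of_nat n * (\<Sum>\<alpha><n. (\<omega> ^ s) ^ \<alpha>)"
      using True by (simp add: m Z_def sum_distrib_left power_mult[symmetric] mult.commute)
    also have "\<dots> = F m"
    proof (cases "s = 0")
      case True then show ?thesis using n by (simp add: m)
    next
      case False
      then have ne: "\<omega> ^ s \<noteq> 1" using prim \<open>s < n\<close> by auto
      have "(\<Sum>\<alpha><n. (\<omega> ^ s) ^ \<alpha>) = ((\<omega> ^ s) ^ n - 1) / (\<omega> ^ s - 1)"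
        using ne by (rule geometric_sum)
      also have "\<dots> = 0" by (simp add: power_mult[symmetric] mult.commute power_mult \<omega>)
      finally have "(\<Sum>\<alpha><n. (\<omega> ^ s) ^ \<alpha>) = 0" .
      moreover have "F (a,s) = 0" using EV_D2[OF EV, of a s] False by (cases "F (a,s) = 0") auto
      ultimately show ?thesis by (simp add: m)
    qed
    finally show ?thesis .
  qed
qed

lemma ideal_sum:
  assumes "\<And>\<alpha>. \<alpha> < n \<Longrightarrow> G \<alpha> \<in> sk_ideal n g"
  shows "j \<le> n \<Longrightarrow> (\<lambda>m. \<Sum>\<alpha><j. G \<alpha> m) \<in> sk_ideal n g"
proof (induction j)
  case 0
  then show ?case using sk_ideal.zero[of n g] by simp
next
  case (Suc j)
  have "(\<lambda>m. \<Sum>\<alpha><Suc j. G \<alpha> m) = sk_add (\<lambda>m. \<Sum>\<alpha><j. G \<alpha> m) (G j)"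
    by (simp add: sk_add_def)
  then show ?case using Suc assms sk_ideal.add by (metis Suc_leD Suc_le_lessD)
qed



lemma uniform_N:
  fixes m :: nat and P :: "nat \<Rightarrow> nat \<Rightarrow> bool"
  assumes mono: "\<And>N a. P N a \<Longrightarrow> P (Suc N) a"
  shows "(\<forall>a<m. \<exists>N. P N a) \<Longrightarrow> \<exists>N. \<forall>a<m. P N a"
proof (induction m)
  case 0 then show ?case by simp
next
  case (Suc m)
  have mono': "P (N + j) a" if "P N a" for N j a
    using that by (induction j) (auto intro: mono)
  obtain N1 where N1: "\<forall>a<m. P N1 a" using Suc by auto
  obtain N2 where N2: "P N2 m" using Suc.prems by auto
  have "\<forall>a<Suc m. P (N1 + N2) a"
  proof (intro allI impI)
    fix a assume "a < Suc m"
    then show "P (N1 + N2) a"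
    proof (cases "a < m")
      case True then show ?thesis using N1 mono' by blast
    next
      case False then have "a = m" using \<open>a < Suc m\<close> by simp
      then show ?thesis using N2 mono'[of N2 m N1] by (simp add: add.commute)
    qed
  qed
  then show ?case by blast
qed

theorem proposition2p3:
  fixes n k :: nat and \<omega> :: "'k::{alg_closed_field, field_char_0}"
  assumes "n \<ge> 2"
    and "\<omega> ^ n = 1" and "\<forall>j. 0 < j \<and> j < n \<longrightarrow> \<omega> ^ j \<noteq> 1"
    and "k \<le> n - 1"
    and "\<exists>m. gcd k n = 2 ^ m"
  shows "\<exists>N. sk_pow n (sk_c n \<omega> k) N \<in> sk_ideal n (sk_e n \<omega> 0)"
proof -
  have n0: "n > 0" using assms(1) by simp
  have \<omega>n: "\<omega> ^ n = 1" by (rule assms(2))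
  have wpow: "\<omega> ^ (a mod n) = \<omega> ^ a" for a by (rule pow_mod[OF \<omega>n])
  have rootn: "(\<omega> ^ a) ^ n = 1" for a by (metis power_mult mult.commute \<omega>n power_one)
  define \<kappa> where "\<kappa> = \<omega> ^ k"
  have \<kappa>n: "\<kappa> ^ n = 1" unfolding \<kappa>_def by (rule rootn)
  define I where "I = sk_ideal n (sk_e n \<omega> 0)"
  define F where "F = (\<lambda>N. sk_pow n (sk_c n \<omega> k) N)"
  have c_eq: "sk_c n \<omega> k = cc n \<kappa>" by (rule sk_c_eq[OF \<kappa>_def \<kappa>n n0])
  have FS: "F (Suc N) = sk_mult n (cc n \<kappa>) (F N)" for N by (simp add: F_def sk_pow_def c_eq)
  have F0: "F 0 = sk_one n" by (simp add: F_def sk_pow_def)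
  have EVF: "EV n (F N)" for N by (induction N) (simp_all add: F0 FS EV_one EV_ccF)
  define P where "P = (\<lambda>N \<alpha>. Z n (F N) (\<omega> ^ \<alpha>) \<in> I)"
  have ccar: "cc n \<kappa> \<in> sk_carrier n" by (rule cc_carrier[OF n0])
  have bcar: "bb n \<mu> \<in> sk_carrier n" for \<mu> by (rule bb_carrier[OF n0])
  have Pper: "P N \<alpha> = P N \<beta>" if "\<alpha> mod n = \<beta> mod n" for N \<alpha> \<beta>
    by (metis P_def that wpow)
  have P00: "P 0 0" unfolding P_def I_def F0 by (simp add: e0_eq[of n \<omega>, symmetric] sk_ideal.gen)
  have Pup: "P (Suc N) \<alpha>" if "P N \<alpha>" for N \<alpha>
  proof -
    have "Z n (F (Suc N)) (\<omega> ^ \<alpha>) = sk_mult n (cc n \<kappa>) (Z n (F N) (\<omega> ^ \<alpha>))"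
      unfolding FS by (rule I1[OF EVF, symmetric])
    then show ?thesis using that ccar unfolding P_def I_def by (simp add: sk_ideal.left)
  qed
  have Pk: "P (Suc N) \<alpha>" if "P N (\<alpha> + k)" for N \<alpha>
  proof -
    have "Z n (F (Suc N)) (\<omega> ^ \<alpha>) = sk_mult n (Z n (F N) (\<omega> ^ \<alpha> * \<kappa>)) (cc n \<kappa>)"
      unfolding FS by (rule I2[OF EVF \<kappa>n, symmetric])
    moreover have "\<omega> ^ \<alpha> * \<kappa> = \<omega> ^ (\<alpha> + k)" by (simp add: \<kappa>_def power_add)
    ultimately show ?thesis using that ccar unfolding P_def I_def by (simp add: sk_ideal.right)
  qed
  have Pd: "P (Suc N) \<alpha>" if "P N (\<alpha> + d')" "P N (\<alpha> + d)" "(d + d') mod n = k mod n" for N \<alpha> d d'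
  proof -
    define \<mu> where "\<mu> = \<omega> ^ d"
    define \<nu> where "\<nu> = \<omega> ^ d'"
    have \<mu>\<nu>: "\<mu> * \<nu> = \<kappa>" unfolding \<mu>_def \<nu>_def \<kappa>_def
      by (metis power_add that(3) wpow)
    have Z1: "Z n (F N) (\<omega> ^ \<alpha> * \<nu>) \<in> I" using that(1) by (simp add: P_def \<nu>_def power_add)
    have Z2: "Z n (F N) (\<omega> ^ \<alpha> * \<mu>) \<in> I" using that(2) by (simp add: P_def \<mu>_def power_add)
    have "sk_add (sk_mult n (bb n \<mu>) (sk_mult n (Z n (F N) (\<omega> ^ \<alpha> * \<nu>)) (bb n \<nu>)))
                (sk_mult n (bb n \<nu>) (sk_mult n (Z n (F N) (\<omega> ^ \<alpha> * \<mu>)) (bb n \<mu>))) \<in> I"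
      unfolding I_def
      by (intro sk_ideal.add sk_ideal.left sk_ideal.right bcar Z1[unfolded I_def] Z2[unfolded I_def])
    moreover have "sk_add (sk_mult n (bb n \<mu>) (sk_mult n (Z n (F N) (\<omega> ^ \<alpha> * \<nu>)) (bb n \<nu>)))
                (sk_mult n (bb n \<nu>) (sk_mult n (Z n (F N) (\<omega> ^ \<alpha> * \<mu>)) (bb n \<mu>)))
         = Z n (F (Suc N)) (\<omega> ^ \<alpha>)"
      unfolding FS \<mu>\<nu>[symmetric] by (rule I3[OF EVF]) (simp_all add: \<mu>_def \<nu>_def rootn)
    ultimately show ?thesis by (simp add: P_def)
  qed
  have Pmono: "P (N + j) \<alpha>" if "P N \<alpha>" for N j \<alpha>
    using that by (induction j) (auto intro: Pup)
  define T where "T = (\<lambda>\<alpha>. \<exists>N. P N \<alpha>)"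
  have T0: "T 0" using P00 by (auto simp: T_def)
  have Tper: "T \<alpha> = T \<beta>" if "\<alpha> mod n = \<beta> mod n" for \<alpha> \<beta>
    using Pper[OF that] by (simp add: T_def)
  have Tk: "T \<alpha>" if "T (\<alpha> + k)" for \<alpha> using that Pk by (auto simp: T_def)
  have Td: "T \<alpha>" if h1: "T (\<alpha> + d')" and h2: "T (\<alpha> + d)" and h3: "(d + d') mod n = k mod n" for \<alpha> d d'
  proof -
    obtain N1 N2 where "P N1 (\<alpha> + d')" "P N2 (\<alpha> + d)" using h1 h2 unfolding T_def by blast
    then have "P (N1 + N2) (\<alpha> + d')" "P (N1 + N2) (\<alpha> + d)"
      using Pmono[of N1 "\<alpha> + d'" N2] Pmono[of N2 "\<alpha> + d" N1] by (simp_all add: add.commute)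
    then show ?thesis using Pd h3 unfolding T_def by blast
  qed
  have Tjk: "T \<alpha>" if "T (\<alpha> + j * k)" for j \<alpha>
    using that
  proof (induction j arbitrary: \<alpha>)
    case 0 then show ?case by simp
  next
    case (Suc j)
    have "T ((\<alpha> + j * k) + k)" using Suc.prems by (simp add: add_ac)
    then have "T (\<alpha> + j * k)" by (rule Tk)
    then show ?case by (rule Suc.IH)
  qed
  have Tplus: "T (\<alpha> + k)" if "T \<alpha>" for \<alpha>
  proof -
    have e: "\<alpha> + k + (n - 1) * k = \<alpha> + n * k" using n0
      by (metis add.assoc Suc_diff_1 mult_Suc)
    have "(\<alpha> + k + (n - 1) * k) mod n = \<alpha> mod n" unfolding e by simp
    then have "T (\<alpha> + k + (n - 1) * k)" using Tper that by blast
    then show ?thesis by (rule Tjk)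
  qed
  have Tmult: "T (j * k)" for j
  proof (induction j)
    case 0 then show ?case using T0 by simp
  next
    case (Suc j) then show ?case using Tplus[of "j * k"] by (simp add: add.commute)
  qed
  have Thalf: "T \<alpha>" if "T (2 * \<alpha> + k)" for \<alpha>
  proof -
    have e: "\<alpha> = n * (\<alpha> div n) + \<alpha> mod n" by simp
    have lt: "\<alpha> mod n < n" using n0 by simp
    have e1: "\<alpha> + (n - \<alpha> mod n) = n * (\<alpha> div n) + n" using e lt by arith
    have e2: "(n - \<alpha> mod n) + (\<alpha> + k) = k + (n * (\<alpha> div n) + n)" using e lt by arith
    have a: "T (\<alpha> + (\<alpha> + k))" using that by (simp add: mult_2 add.assoc)
    have b: "T (\<alpha> + (n - \<alpha> mod n))"
      using Tper[of "\<alpha> + (n - \<alpha> mod n)" 0] T0 unfolding e1 by simp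
    have e3: "k + (n * (\<alpha> div n) + n) = k + n * (\<alpha> div n + 1)" by simp
    have c: "((n - \<alpha> mod n) + (\<alpha> + k)) mod n = k mod n" unfolding e2 e3 by (rule mod_mult_self2)
    show ?thesis by (rule Td[OF a b c])
  qed
  have T2: "T \<alpha>" if "T (2 * \<alpha>)" for \<alpha>
    using Thalf Tplus that by blast
  have Tpow: "T \<alpha>" if "T (2 ^ m * \<alpha>)" for m \<alpha>
    using that
  proof (induction m arbitrary: \<alpha>)
    case 0 then show ?case by simp
  next
    case (Suc m)
    have "T (2 ^ m * (2 * \<alpha>))" using Suc.prems by (simp add: mult_ac)
    then have "T (2 * \<alpha>)" by (rule Suc.IH)
    then show ?case by (rule T2)
  qed
  obtain m where m: "gcd k n = 2 ^ m" using assms(5) by blast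
  have Tall: "T \<alpha>" for \<alpha>
  proof (cases "k = 0")
    case True
    then have "2 ^ m = n" using m by simp
    have "(2 ^ m * \<alpha>) mod n = 0 mod n" unfolding \<open>2 ^ m = n\<close> by simp
    then have "T (2 ^ m * \<alpha>)" using Tper T0 by blast
    then show ?thesis by (rule Tpow)
  next
    case False
    obtain x y where xy: "k * x = n * y + gcd k n" using bezout_nat[OF False] by blast
    have "((x * \<alpha>) * k) mod n = (2 ^ m * \<alpha>) mod n"
    proof -
      have "(x * \<alpha>) * k = (n * y + 2 ^ m) * \<alpha>" using xy m by (metis mult.assoc mult.commute)
      also have "\<dots> = 2 ^ m * \<alpha> + n * (y * \<alpha>)" by (simp add: algebra_simps)
      finally show ?thesis by simp
    qed
    then have "T (2 ^ m * \<alpha>)" using Tper Tmult by blast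
    then show ?thesis by (rule Tpow)
  qed
  have "\<exists>N. \<forall>\<alpha><n. P N \<alpha>"
    by (rule uniform_N[where P=P]) (use Pup Tall in \<open>auto simp: T_def\<close>)
  then obtain N where N: "\<forall>\<alpha><n. P N \<alpha>" by blast
  have "(\<lambda>m. \<Sum>\<alpha><n. Z n (F N) (\<omega> ^ \<alpha>) m) \<in> I"
    unfolding I_def by (rule ideal_sum) (use N in \<open>auto simp: P_def I_def\<close>)
  then have "F N \<in> I" using sum_Z[OF EVF \<omega>n assms(3) n0] by simp
  then show ?thesis unfolding F_def I_def by blast
qed

end
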